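(* Let $n\ge1$, $a_{i0}\ge0$, $a_{ij}\ge 0$ and $\pi_i>0$ for $i,j=1,\ldots,n$, let $\varepsilon>0$, and let $\mu_1,\ldots,\mu_n$ satisfy $\mu_i\ge\sum_{j\ne i}(a_{ij}+a_{ji})/2$. For $u\in(0,\infty)^n$ define $$A_{ij}(u)=\delta_{ij}a_{i0}+\delta_{ij}\sum_{k=1}^na_{ik}u_k+a_{ij}u_i,\qquad H_{ij}(u)=\delta_{ij}\frac{\pi_i}{u_i^{2}},$$ $$H_{\varepsilon,ij}(u)=\delta_{ij}\Big(\frac{\pi_i}{u_i^2}+\frac{\varepsilon}{u_i}\Big),\qquad A_\varepsilon(u)=A(u)+\varepsilon A^0(u),\quad A^0_{ij}(u)=\delta_{ij}\frac{\mu_i}{\pi_i}u_i^2.$$ Then for all $z\in\mathbb{R}^n$ and $u\in(0,\infty)^n$, $$z^TH_\varepsilon(u)A_\varepsilon(u)z\ge z^TH(u)A(u)z+2\varepsilon\sum_{i=1}^na_{ii}z_i^2+\varepsilon^2\sum_{i=1}^n\frac{\mu_i}{\pi_i}u_iz_i^2.$$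
   Context: $\delta_{ij}$ is the Kronecker symbol. $H_\varepsilon(u)$ is the Hessian of $h(u)+\varepsilon\sum_iu_i(\log u_i-1)$ with $h(u)=\sum_i\pi_i(u_i-\log u_i)$. *)

theory Defs
  imports "HOL-Analysis.Analysis"
begin

text \<open>Index set {1..n} is rendered as a finite type 'n; vectors are real^'n,
  matrices real^'n^'n. a0 $ i = a_{i0}, a $ i $ j = a_{ij}.\<close>

definition A_mat :: "real^'n \<Rightarrow> real^'n^'n \<Rightarrow> real^'n \<Rightarrow> real^'n^'n" where
  "A_mat a0 a u = (\<chi> i j. (if i = j then a0$i + (\<Sum>k\<in>UNIV. a$i$k * u$k) else 0) + a$i$j * u$i)"

definition H_mat :: "real^'n \<Rightarrow> real^'n \<Rightarrow> real^'n^'n" where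
  "H_mat p u = (\<chi> i j. if i = j then p$i / (u$i)^2 else 0)"

definition H_eps_mat :: "real^'n \<Rightarrow> real \<Rightarrow> real^'n \<Rightarrow> real^'n^'n" where
  "H_eps_mat p eps u = (\<chi> i j. if i = j then p$i / (u$i)^2 + eps / u$i else 0)"

definition A0_mat :: "real^'n \<Rightarrow> real^'n \<Rightarrow> real^'n \<Rightarrow> real^'n^'n" where
  "A0_mat mu p u = (\<chi> i j. if i = j then mu$i / p$i * (u$i)^2 else 0)"

definition A_eps_mat :: "real^'n \<Rightarrow> real^'n^'n \<Rightarrow> real^'n \<Rightarrow> real^'n \<Rightarrow> real \<Rightarrow> real^'n \<Rightarrow> real^'n^'n" where
  "A_eps_mat a0 a mu p eps u = A_mat a0 a u + eps *\<^sub>R A0_mat mu p u"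

end

theory Submission
  imports Defs
begin
lemma qf_diag:
  fixes d :: "'n::finite \<Rightarrow> real" and M :: "real^'n^'n" and z :: "real^'n"
  shows "z \<bullet> (((\<chi> i j. if i = j then d i else 0) ** M) *v z) = (\<Sum>i\<in>UNIV. \<Sum>j\<in>UNIV. z$i * d i * M$i$j * z$j)"
  by (simp add: inner_vec_def matrix_vector_mult_def matrix_matrix_mult_def if_distrib[where f="\<lambda>x. x * _"] sum_distrib_left mult.assoc cong: if_cong)

lemma cross_bound:
  fixes a :: "real^'n^'n" and z mu :: "real^'n"
  assumes "\<forall>i j. a$i$j \<ge> 0"
    and "\<forall>i. mu$i \<ge> (\<Sum>j\<in>{j. j \<noteq> i}. (a$i$j + a$j$i) / 2)"
  shows "(\<Sum>i\<in>UNIV. \<Sum>j\<in>UNIV. a$i$j * z$i * z$j) \<ge> (\<Sum>i\<in>UNIV. a$i$i * (z$i)^2) - (\<Sum>i\<in>UNIV. mu$i * (z$i)^2)"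
proof -
  have t: "a$i$j * z$i * z$j \<ge> - (a$i$j * (z$i)^2 + a$i$j * (z$j)^2) / 2 + (if i = j then 2 * a$i$i * (z$i)^2 else 0)" for i j
  proof (cases "i = j")
    case True then show ?thesis by (simp add: power2_eq_square)
  next
    case False
    have "0 \<le> a$i$j * (z$i + z$j)^2" using assms(1) by simp
    then show ?thesis using False by (simp add: power2_eq_square algebra_simps)
  qed
  have s1: "(\<Sum>i\<in>UNIV. \<Sum>j\<in>UNIV. a$i$j * z$i * z$j) \<ge> (\<Sum>i\<in>UNIV. \<Sum>j\<in>UNIV. - (a$i$j * (z$i)^2 + a$i$j * (z$j)^2) / 2 + (if i = j then 2 * a$i$i * (z$i)^2 else 0))"
    by (intro sum_mono t)
  have s2: "(\<Sum>i\<in>UNIV. \<Sum>j\<in>UNIV. - (a$i$j * (z$i)^2 + a$i$j * (z$j)^2) / 2 + (if i = j then 2 * a$i$i * (z$i)^2 else 0))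
     = - (\<Sum>i\<in>UNIV. \<Sum>j\<in>UNIV. a$i$j * (z$i)^2) / 2 - (\<Sum>i\<in>UNIV. \<Sum>j\<in>UNIV. a$i$j * (z$j)^2) / 2 + 2 * (\<Sum>i\<in>UNIV. a$i$i * (z$i)^2)"
    by (simp add: sum.distrib sum_subtractf sum_divide_distrib sum_negf sum_distrib_left diff_divide_distrib add_divide_distrib algebra_simps)
  have s3: "(\<Sum>i\<in>UNIV. \<Sum>j\<in>UNIV. a$i$j * (z$j)^2) = (\<Sum>i\<in>UNIV. \<Sum>j\<in>UNIV. a$j$i * (z$i)^2)"
    by (rule sum.swap)
  have s4: "(\<Sum>i\<in>UNIV. \<Sum>j\<in>UNIV. a$i$j * (z$i)^2) / 2 + (\<Sum>i\<in>UNIV. \<Sum>j\<in>UNIV. a$j$i * (z$i)^2) / 2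
      = (\<Sum>i\<in>UNIV. (z$i)^2 * (\<Sum>j\<in>UNIV. (a$i$j + a$j$i)/2))"
    by (simp add: sum.distrib sum_distrib_left sum_divide_distrib algebra_simps add_divide_distrib)
  have s5: "(\<Sum>i\<in>UNIV. (z$i)^2 * (\<Sum>j\<in>UNIV. (a$i$j + a$j$i)/2)) \<le> (\<Sum>i\<in>UNIV. (z$i)^2 * (mu$i + a$i$i))"
  proof (intro sum_mono mult_left_mono)
    fix i :: 'n
    have "{j. j \<noteq> i} = (UNIV::'n set) - {i}" by auto
    then have "(\<Sum>j\<in>UNIV. (a$i$j + a$j$i)/2) = (\<Sum>j\<in>{j. j \<noteq> i}. (a$i$j + a$j$i)/2) + a$i$i"
      by (simp add: sum_diff1)
    then show "(\<Sum>j\<in>UNIV. (a$i$j + a$j$i)/2) \<le> mu$i + a$i$i" using assms(2) by auto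
  qed simp
  have s6: "(\<Sum>i\<in>UNIV. (z$i)^2 * (mu$i + a$i$i)) = (\<Sum>i\<in>UNIV. mu$i * (z$i)^2) + (\<Sum>i\<in>UNIV. a$i$i * (z$i)^2)"
    by (simp add: sum.distrib algebra_simps)
  from s1 s2 s3 s4 s5 s6 show ?thesis by linarith
qed

theorem lemma4:
  fixes a0 :: "real^'n" and a :: "real^'n^'n" and p mu u z :: "real^'n" and eps :: real
  assumes "\<forall>i. a0$i \<ge> 0"
    and "\<forall>i j. a$i$j \<ge> 0"
    and "\<forall>i. p$i > 0"
    and "eps > 0"
    and "\<forall>i. mu$i \<ge> (\<Sum>j\<in>{j. j \<noteq> i}. (a$i$j + a$j$i) / 2)"
    and "\<forall>i. u$i > 0"
  shows "z \<bullet> ((H_eps_mat p eps u ** A_eps_mat a0 a mu p eps u) *v z)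
      \<ge> z \<bullet> ((H_mat p u ** A_mat a0 a u) *v z)
         + 2 * eps * (\<Sum>i\<in>UNIV. a$i$i * (z$i)^2)
         + eps^2 * (\<Sum>i\<in>UNIV. mu$i / p$i * u$i * (z$i)^2)"
proof -
  define h where "h i = p$i / (u$i)^2" for i
  define e where "e i = eps / u$i" for i
  define Am where "Am = A_mat a0 a u"
  define B where "B = A0_mat mu p u"
  define S where "S i = (\<Sum>k\<in>UNIV. a$i$k * u$k)" for i
  have HE: "H_eps_mat p eps u = (\<chi> i j. if i = j then h i + e i else 0)"
    unfolding H_eps_mat_def h_def e_def by simp
  have H: "H_mat p u = (\<chi> i j. if i = j then h i else 0)"
    unfolding H_mat_def h_def by simp
  have L: "z \<bullet> ((H_eps_mat p eps u ** A_eps_mat a0 a mu p eps u) *v z)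
     = (\<Sum>i\<in>UNIV. \<Sum>j\<in>UNIV. z$i * (h i + e i) * (Am$i$j + eps * B$i$j) * z$j)"
    unfolding HE qf_diag A_eps_mat_def Am_def B_def by simp
  have R: "z \<bullet> ((H_mat p u ** A_mat a0 a u) *v z) = (\<Sum>i\<in>UNIV. \<Sum>j\<in>UNIV. z$i * h i * Am$i$j * z$j)"
    unfolding H qf_diag Am_def by simp
  have pt: "z$i * (h i + e i) * (Am$i$j + eps * B$i$j) * z$j
     = z$i * h i * Am$i$j * z$j + eps * (z$i * Am$i$j * z$j / u$i) + eps * (z$i * (h i + e i) * B$i$j * z$j)" for i j
    unfolding e_def by (simp add: algebra_simps)
  have L2: "(\<Sum>i\<in>UNIV. \<Sum>j\<in>UNIV. z$i * (h i + e i) * (Am$i$j + eps * B$i$j) * z$j)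
     = (\<Sum>i\<in>UNIV. \<Sum>j\<in>UNIV. z$i * h i * Am$i$j * z$j)
       + eps * (\<Sum>i\<in>UNIV. \<Sum>j\<in>UNIV. z$i * Am$i$j * z$j / u$i)
       + eps * (\<Sum>i\<in>UNIV. \<Sum>j\<in>UNIV. z$i * (h i + e i) * B$i$j * z$j)"
    unfolding pt by (simp add: sum.distrib sum_distrib_left)
  have B3: "(\<Sum>j\<in>UNIV. z$i * (h i + e i) * B$i$j * z$j) = mu$i * (z$i)^2 + eps * (mu$i / p$i * u$i * (z$i)^2)" for i
  proof -
    have "(\<Sum>j\<in>UNIV. z$i * (h i + e i) * B$i$j * z$j) = z$i * (h i + e i) * (mu$i / p$i * (u$i)^2) * z$i"
      unfolding B_def A0_mat_def by (simp add: if_distrib[where f="\<lambda>x. _ * x"] if_distrib[where f="\<lambda>x. x * _"] cong: if_cong)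
    also have "\<dots> = mu$i * (z$i)^2 + eps * (mu$i / p$i * u$i * (z$i)^2)"
      using assms(3)[rule_format, of i] assms(6)[rule_format, of i] unfolding h_def e_def
      by (simp add: field_simps power2_eq_square)
    finally show ?thesis .
  qed
  have A2: "(\<Sum>j\<in>UNIV. z$i * Am$i$j * z$j / u$i) = (z$i)^2 * (a0$i + S i) / u$i + (\<Sum>j\<in>UNIV. a$i$j * z$i * z$j)" for i
  proof -
    have "(\<Sum>j\<in>UNIV. z$i * Am$i$j * z$j / u$i) = (\<Sum>j\<in>UNIV. (if i = j then z$i * (a0$i + S i) * z$j / u$i else 0) + a$i$j * z$i * z$j)"
      using assms(6)[rule_format, of i] unfolding Am_def A_mat_def S_def by (intro sum.cong) (auto simp: field_simps)
    also have "\<dots> = (z$i)^2 * (a0$i + S i) / u$i + (\<Sum>j\<in>UNIV. a$i$j * z$i * z$j)"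
      by (simp add: sum.distrib power2_eq_square)
    finally show ?thesis .
  qed
  have Sb: "(z$i)^2 * (a0$i + S i) / u$i \<ge> a$i$i * (z$i)^2" for i
  proof -
    have "a$i$i * u$i \<le> S i" unfolding S_def
      using assms(2,6) by (intro member_le_sum[where f="\<lambda>k. a$i$k * u$k"] mult_nonneg_nonneg) (auto simp: less_imp_le)
    then have "a$i$i * u$i \<le> a0$i + S i" using assms(1)[rule_format, of i] by linarith
    then have "a$i$i \<le> (a0$i + S i) / u$i" using assms(6)[rule_format, of i] by (simp add: field_simps)
    then have "(z$i)^2 * a$i$i \<le> (z$i)^2 * ((a0$i + S i) / u$i)" by (intro mult_left_mono) auto
    then show ?thesis by (simp add: algebra_simps)
  qed
  have Q: "(\<Sum>i\<in>UNIV. \<Sum>j\<in>UNIV. z$i * Am$i$j * z$j / u$i) \<ge> 2 * (\<Sum>i\<in>UNIV. a$i$i * (z$i)^2) - (\<Sum>i\<in>UNIV. mu$i * (z$i)^2)"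
  proof -
    have "(\<Sum>i\<in>UNIV. \<Sum>j\<in>UNIV. z$i * Am$i$j * z$j / u$i) = (\<Sum>i\<in>UNIV. (z$i)^2 * (a0$i + S i) / u$i) + (\<Sum>i\<in>UNIV. \<Sum>j\<in>UNIV. a$i$j * z$i * z$j)"
      unfolding A2 by (simp add: sum.distrib)
    moreover have "(\<Sum>i\<in>UNIV. (z$i)^2 * (a0$i + S i) / u$i) \<ge> (\<Sum>i\<in>UNIV. a$i$i * (z$i)^2)"
      by (intro sum_mono Sb)
    moreover have "(\<Sum>i\<in>UNIV. \<Sum>j\<in>UNIV. a$i$j * z$i * z$j) \<ge> (\<Sum>i\<in>UNIV. a$i$i * (z$i)^2) - (\<Sum>i\<in>UNIV. mu$i * (z$i)^2)"
      using cross_bound[OF assms(2,5)] .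
    ultimately show ?thesis by linarith
  qed
  have T3: "(\<Sum>i\<in>UNIV. \<Sum>j\<in>UNIV. z$i * (h i + e i) * B$i$j * z$j) = (\<Sum>i\<in>UNIV. mu$i * (z$i)^2) + eps * (\<Sum>i\<in>UNIV. mu$i / p$i * u$i * (z$i)^2)"
    unfolding B3 by (simp add: sum.distrib sum_distrib_left)
  have "eps * (\<Sum>i\<in>UNIV. \<Sum>j\<in>UNIV. z$i * Am$i$j * z$j / u$i) \<ge> eps * (2 * (\<Sum>i\<in>UNIV. a$i$i * (z$i)^2) - (\<Sum>i\<in>UNIV. mu$i * (z$i)^2))"
    using Q assms(4) by (intro mult_left_mono) auto
  then show ?thesis unfolding L R L2 T3 by (simp add: algebra_simps power2_eq_square)
qed
end
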